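(* Let $n \ge 1$, $t \ge 1$ and $\ell \ge 1$ be integers. Fix a set of nonterminal symbols $V = \{\mathtt{NT}_1, \dotsc, \mathtt{NT}_n\}$, a distinguished start symbol $S \notin V$, and a terminal alphabet $\Sigma = \{\mathtt{t}_1, \dotsc, \mathtt{t}_t\}$ with $|\Sigma| = t$. Then the number of distinct reduced context-free grammars in Chomsky normal form with start symbol $S$, nonterminals $V$ and terminals $\Sigma$ is at least $2^{n^3 + nt - 2n}$, and the number of distinct strings of length $\ell$ over $\Sigma$ is $t^\ell$.
   Context: A context-free grammar in Chomsky normal form here consists of a finite set of production rules, each either lexical, of the form $A \to a$ with $A \in V$ and $a \in \Sigma$, or nonlexical, of the form $A \to B\,C$ with $A \in \{S\} \cup V$ and $B, C \in V$. Two grammars (over the same fixed $S$, $V$, $\Sigma$) are distinct iff their sets of production rules differ. A grammar is reduced if every nonterminal in $V$ is accessible (appears in some derivation starting from $S$) and productive (derives some string of terminals). *)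

theory Defs
  imports Main
begin

datatype nt = Start | NT nat

datatype rule = Lex nt nat | Bin nt nt nt

datatype sym = N nt | T nat

definition nonterms :: "nat \<Rightarrow> nt set" where
  "nonterms n = NT ` {1..n}"

definition terms :: "nat \<Rightarrow> nat set" where
  "terms t = {1..t}"

definition rule_ok :: "nat \<Rightarrow> nat \<Rightarrow> rule \<Rightarrow> bool" where
  "rule_ok n t r = (case r of
      Lex A a \<Rightarrow> A \<in> nonterms n \<and> a \<in> terms t
    | Bin A B C \<Rightarrow> A \<in> insert Start (nonterms n) \<and> B \<in> nonterms n \<and> C \<in> nonterms n)"

definition cnf_grammar :: "nat \<Rightarrow> nat \<Rightarrow> rule set \<Rightarrow> bool" where
  "cnf_grammar n t G = (\<forall>r\<in>G. rule_ok n t r)"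

inductive step :: "rule set \<Rightarrow> sym list \<Rightarrow> sym list \<Rightarrow> bool" for G where
  stepLex: "Lex A a \<in> G \<Longrightarrow> step G (u @ [N A] @ v) (u @ [T a] @ v)"
| stepBin: "Bin A B C \<in> G \<Longrightarrow> step G (u @ [N A] @ v) (u @ [N B, N C] @ v)"

abbreviation derives :: "rule set \<Rightarrow> sym list \<Rightarrow> sym list \<Rightarrow> bool" where
  "derives G \<equiv> (step G)\<^sup>*\<^sup>*"

definition accessible :: "rule set \<Rightarrow> nt \<Rightarrow> bool" where
  "accessible G A = (\<exists>w. derives G [N Start] w \<and> N A \<in> set w)"

definition productive :: "rule set \<Rightarrow> nt \<Rightarrow> bool" where
  "productive G A = (\<exists>w. derives G [N A] (map T w))"

definition reduced :: "nat \<Rightarrow> rule set \<Rightarrow> bool" where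
  "reduced n G = (\<forall>A\<in>nonterms n. accessible G A \<and> productive G A)"

end

theory Submission
  imports Defs
begin

definition coreG :: "nat \<Rightarrow> rule set" where
  "coreG n = (\<lambda>i. Lex (NT i) 1) ` {1..n} \<union> (\<lambda>i. Bin Start (NT i) (NT i)) ` {1..n}"

definition freeG :: "nat \<Rightarrow> nat \<Rightarrow> rule set" where
  "freeG n t = (\<lambda>(i,j,k). Bin (NT i) (NT j) (NT k)) ` ({1..n}\<times>{1..n}\<times>{1..n})
     \<union> (\<lambda>(i,a). Lex (NT i) a) ` ({1..n}\<times>{2..t})"

definition allG :: "nat \<Rightarrow> nat \<Rightarrow> rule set" where
  "allG n t = (\<lambda>(A,a). Lex A a) ` (nonterms n \<times> terms t)
     \<union> (\<lambda>(A,B,C). Bin A B C) ` (insert Start (nonterms n) \<times> nonterms n \<times> nonterms n)"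

lemma allG_finite: "finite (allG n t)"
  unfolding allG_def nonterms_def terms_def by auto

lemma rule_ok_allG: "rule_ok n t r \<Longrightarrow> r \<in> allG n t"
  unfolding rule_ok_def allG_def by (cases r) force+

lemma fin_set: "finite {G. cnf_grammar n t G \<and> reduced n G}"
proof (rule finite_subset[of _ "Pow (allG n t)"])
  show "{G. cnf_grammar n t G \<and> reduced n G} \<subseteq> Pow (allG n t)"
    unfolding cnf_grammar_def using rule_ok_allG by blast
  show "finite (Pow (allG n t))" using allG_finite by simp
qed

lemma card_free:
  assumes "t \<ge> 1"
  shows "card (freeG n t) = n^3 + n*(t-1)"
proof -
  have d: "(\<lambda>(i,j,k). Bin (NT i) (NT j) (NT k)) ` ({1..n}\<times>{1..n}\<times>{1..n})
     \<inter> (\<lambda>(i,a). Lex (NT i) a) ` ({1..n}\<times>{2..t}) = {}" by auto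
  have i1: "inj_on (\<lambda>(i,j,k). Bin (NT i) (NT j) (NT k)) ({1..n}\<times>{1..n}\<times>{1..n})"
    by (auto simp: inj_on_def)
  have i2: "inj_on (\<lambda>(i,a). Lex (NT i) a) ({1..n}\<times>{2..t})"
    by (auto simp: inj_on_def)
  have c1: "card ((\<lambda>(i,j,k). Bin (NT i) (NT j) (NT k)) ` ({1..n}\<times>{1..n}\<times>{1..n})) = n^3"
    using card_image[OF i1] by (simp add: card_cartesian_product power3_eq_cube)
  have c2: "card ((\<lambda>(i,a). Lex (NT i) a) ` ({1..n}\<times>{2..t})) = n*(t-1)"
    using card_image[OF i2] by (simp add: card_cartesian_product)
  show ?thesis unfolding freeG_def
    by (subst card_Un_disjoint) (use d c1 c2 in auto)
qed

lemma good:
  assumes "t \<ge> 1" "X \<subseteq> freeG n t"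
  shows "cnf_grammar n t (coreG n \<union> X) \<and> reduced n (coreG n \<union> X)"
proof
  show "cnf_grammar n t (coreG n \<union> X)"
    using assms unfolding cnf_grammar_def coreG_def freeG_def rule_ok_def nonterms_def terms_def
    by auto
  show "reduced n (coreG n \<union> X)"
    unfolding reduced_def
  proof
    fix A assume "A \<in> nonterms n"
    then obtain i where i: "i \<in> {1..n}" "A = NT i" unfolding nonterms_def by auto
    have l: "Lex A 1 \<in> coreG n \<union> X" using i unfolding coreG_def by auto
    have b: "Bin Start A A \<in> coreG n \<union> X" using i unfolding coreG_def by auto
    have "step (coreG n \<union> X) ([] @ [N A] @ []) ([] @ [T 1] @ [])"
      by (rule step.stepLex[OF l])
    hence "derives (coreG n \<union> X) [N A] (map T [1])" by simp
    hence p: "productive (coreG n \<union> X) A" unfolding productive_def by blast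
    have "step (coreG n \<union> X) ([] @ [N Start] @ []) ([] @ [N A, N A] @ [])"
      by (rule step.stepBin[OF b])
    hence "derives (coreG n \<union> X) [N Start] [N A, N A]" by simp
    hence "accessible (coreG n \<union> X) A" unfolding accessible_def by force
    with p show "accessible (coreG n \<union> X) A \<and> productive (coreG n \<union> X) A" by blast
  qed
qed

theorem lemma1:
  fixes n t l :: nat
  assumes "n \<ge> 1" and "t \<ge> 1" and "l \<ge> 1"
  shows "card {G. cnf_grammar n t G \<and> reduced n G} \<ge> 2 ^ (n^3 + n*t - 2*n)
     \<and> card {w :: nat list. length w = l \<and> set w \<subseteq> terms t} = t ^ l"
proof
  have disj: "coreG n \<inter> freeG n t = {}"
    unfolding coreG_def freeG_def by auto
  have inj: "inj_on (\<lambda>X. coreG n \<union> X) (Pow (freeG n t))"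
    unfolding inj_on_def using disj by blast
  have ffin: "finite (freeG n t)" unfolding freeG_def by auto
  have sub: "(\<lambda>X. coreG n \<union> X) ` Pow (freeG n t) \<subseteq> {G. cnf_grammar n t G \<and> reduced n G}"
    using good[OF assms(2)] by blast
  have "(2::nat) ^ (n^3 + n*t - 2*n) \<le> 2 ^ (n^3 + n*(t-1))"
    by (rule power_increasing) (auto simp: right_diff_distrib')
  also have "\<dots> = card (Pow (freeG n t))"
    using card_free[OF assms(2)] ffin by (simp add: card_Pow)
  also have "\<dots> = card ((\<lambda>X. coreG n \<union> X) ` Pow (freeG n t))"
    using card_image[OF inj] by simp
  also have "\<dots> \<le> card {G. cnf_grammar n t G \<and> reduced n G}"
    by (rule card_mono[OF fin_set sub])
  finally show "card {G. cnf_grammar n t G \<and> reduced n G} \<ge> 2 ^ (n^3 + n*t - 2*n)" .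
  have "{w :: nat list. length w = l \<and> set w \<subseteq> terms t} = {xs. set xs \<subseteq> terms t \<and> length xs = l}"
    by blast
  also have "card \<dots> = card (terms t) ^ l"
    by (rule card_lists_length_eq) (simp add: terms_def)
  finally show "card {w :: nat list. length w = l \<and> set w \<subseteq> terms t} = t ^ l"
    by (simp add: terms_def)
qed

end
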